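(* For every $d\in\mathbb{N}$, $n(d)\le m(d)+d$.
   Context: Unit vectors $x_1,\dots,x_n\in\mathbb{C}^d$ form a weighted $2$-design for $\mathbb{CP}^{d-1}$ if there exist weights $w_1,\dots,w_n\ge 0$ such that $\sum_{k=1}^n w_k (x_k^{\otimes 2})(x_k^{\otimes 2})^*$ equals the orthogonal projection of $(\mathbb{C}^d)^{\otimes 2}$ onto the subspace of symmetric tensors. $n(d)$ denotes the smallest $n$ such that there exist $n$ unit vectors in $\mathbb{C}^d$ forming a weighted $2$-design for $\mathbb{CP}^{d-1}$. A Sidon set is a subset $S$ of a finite abelian group $G$ such that $a+b=c+d$ with $a,b,c,d\in S$ implies $\{a,b\}=\{c,d\}$. $m(d)$ denotes the smallest order $|G|$ of a finite abelian group $G$ containing a Sidon set of size $d$. *)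

theory Defs
  imports Complex_Main "HOL-Algebra.Group"
begin

(* Vectors in C^d are functions nat => complex, only indices < d matter.
   A family of n vectors is x :: nat => nat => complex, x k = k-th vector (k < n). *)

definition unit_vec :: "nat \<Rightarrow> (nat \<Rightarrow> complex) \<Rightarrow> bool" where
  "unit_vec d v \<longleftrightarrow> (\<Sum>i<d. (cmod (v i))^2) = 1"

(* Entry ((i,j),(k,l)) of the orthogonal projection of (C^d)^{\<otimes>2} onto the
   symmetric tensors, in the standard basis e_i \<otimes> e_j: P_sym = (I + SWAP)/2. *)
definition sym_proj_entry :: "nat \<Rightarrow> nat \<Rightarrow> nat \<Rightarrow> nat \<Rightarrow> complex" where
  "sym_proj_entry i j k l =
     ((if i = k \<and> j = l then 1 else 0) + (if i = l \<and> j = k then 1 else 0)) / 2"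

(* x_0,...,x_{n-1} unit vectors in C^d forming a weighted 2-design:
   \<Sum>_k w_k (x_k\<otimes>x_k)(x_k\<otimes>x_k)^* = P_sym, compared entrywise. *)
definition weighted_2design :: "nat \<Rightarrow> nat \<Rightarrow> (nat \<Rightarrow> nat \<Rightarrow> complex) \<Rightarrow> bool" where
  "weighted_2design d n x \<longleftrightarrow>
     (\<forall>k<n. unit_vec d (x k)) \<and>
     (\<exists>w :: nat \<Rightarrow> real. (\<forall>k<n. w k \<ge> 0) \<and>
        (\<forall>i<d. \<forall>j<d. \<forall>i'<d. \<forall>j'<d.
           (\<Sum>k<n. complex_of_real (w k) * (x k i * x k j) * cnj (x k i' * x k j'))
             = sym_proj_entry i j i' j'))"

definition n_design :: "nat \<Rightarrow> nat" where
  "n_design d = (LEAST n. \<exists>x. weighted_2design d n x)"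

definition sidon :: "('a, 'b) monoid_scheme \<Rightarrow> 'a set \<Rightarrow> bool" where
  "sidon G S \<longleftrightarrow> S \<subseteq> carrier G \<and>
     (\<forall>a\<in>S. \<forall>b\<in>S. \<forall>c\<in>S. \<forall>e\<in>S.
        a \<otimes>\<^bsub>G\<^esub> b = c \<otimes>\<^bsub>G\<^esub> e \<longrightarrow> {a, b} = {c, e})"

(* Every finite group is isomorphic to one with carrier a subset of nat, so
   quantifying over groups with carrier type nat loses no generality. *)
definition m_sidon :: "nat \<Rightarrow> nat" where
  "m_sidon d = (LEAST N. \<exists>G :: nat monoid. comm_group G \<and> finite (carrier G) \<and>
       card (carrier G) = N \<and> (\<exists>S. sidon G S \<and> card S = d))"

end

theory Submission
  imports Defs "HOL-Algebra.Multiplicative_Group"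
begin

definition char_on :: "('a,'b) monoid_scheme \<Rightarrow> 'a set \<Rightarrow> ('a \<Rightarrow> complex) \<Rightarrow> bool" where
  "char_on G A \<chi> \<longleftrightarrow> (\<forall>x\<in>A. \<forall>y\<in>A. \<chi> (x \<otimes>\<^bsub>G\<^esub> y) = \<chi> x * \<chi> y) \<and> (\<forall>x\<in>A. cmod (\<chi> x) = 1)"

context comm_group
begin

lemma char_on_one:
  assumes "char_on G H \<chi>" "subgroup H G"
  shows "\<chi> \<one> = 1"
proof -
  have h: "\<one> \<in> H" using assms(2) by (simp add: subgroup.one_closed)
  then have "\<chi> \<one> = \<chi> \<one> * \<chi> \<one>" using assms(1) unfolding char_on_def
    by (metis l_one one_closed)
  moreover have "\<chi> \<one> \<noteq> 0" using assms(1) h unfolding char_on_def by fastforce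
  ultimately show ?thesis by (metis mult_cancel_left1)
qed

lemma subgroup_pow_closed:
  assumes "subgroup H G" "x \<in> H" shows "x [^] (n::nat) \<in> H"
  by (induction n) (use assms in \<open>auto simp: subgroup.one_closed subgroup.m_closed\<close>)

lemma char_on_pow:
  assumes "char_on G H \<chi>" "subgroup H G" "x \<in> H"
  shows "\<chi> (x [^] (n::nat)) = \<chi> x ^ n"
proof (induction n)
  case 0 then show ?case using char_on_one[OF assms(1,2)] by simp
next
  case (Suc n)
  have "\<chi> (x [^] Suc n) = \<chi> (x [^] n \<otimes> x)" by simp
  also have "\<dots> = \<chi> (x [^] n) * \<chi> x"
    using assms subgroup_pow_closed[OF assms(2,3)] unfolding char_on_def by blast
  finally show ?case using Suc by simp
qed

lemma char_on_inv:
  assumes "char_on G H \<chi>" "subgroup H G" "x \<in> H"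
  shows "\<chi> (inv x) = cnj (\<chi> x)"
proof -
  have xi: "inv x \<in> H" using assms by (simp add: subgroup.m_inv_closed)
  have xc: "x \<in> carrier G" using assms subgroup.subset by blast
  have "\<chi> x * \<chi> (inv x) = 1"
    using assms xi xc char_on_one[OF assms(1,2)] unfolding char_on_def
    by (metis r_inv)
  moreover have "\<chi> x * cnj (\<chi> x) = 1"
    using assms unfolding char_on_def
    by (metis complex_norm_square mult.commute of_real_1 power_one)
  ultimately show ?thesis
    by (metis mult.left_commute mult_1_right mult.commute)
qed

end

context comm_group
begin

lemma least_pow_dvd:
  assumes fin: "finite (carrier G)" and H: "subgroup H G" and a: "a \<in> carrier G"
    and k: "k = (LEAST k. 0 < k \<and> a [^] k \<in> H)"
  shows "0 < k" "a [^] k \<in> H" "\<And>n. a [^] (n::nat) \<in> H \<Longrightarrow> k dvd n"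
proof -
  have ex: "0 < order G \<and> a [^] order G \<in> H"
    using fin a pow_order_eq_1 H subgroup.one_closed
    by (metis card_gt_0_iff empty_iff one_closed order_def)
  have kk: "0 < k \<and> a [^] k \<in> H" unfolding k by (rule LeastI_ex) (use ex in blast)
  then show "0 < k" "a [^] k \<in> H" by auto
  fix n :: nat assume n: "a [^] n \<in> H"
  define q r where "q = n div k" and "r = n mod k"
  have nqr: "n = k * q + r" unfolding q_def r_def by simp
  have rk: "r < k" unfolding r_def using kk by simp
  have "a [^] n = (a [^] k) [^] q \<otimes> a [^] r"
    using a by (simp add: nqr nat_pow_mult nat_pow_pow)
  then have "a [^] r = inv ((a [^] k) [^] q) \<otimes> a [^] n"
    using a by (simp add: inv_solve_left)
  moreover have "inv ((a [^] k) [^] q) \<in> H"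
    using H kk by (simp add: subgroup_pow_closed subgroup.m_inv_closed)
  ultimately have "a [^] r \<in> H" using H n subgroup.m_closed by fastforce
  then have "r = 0" using rk not_less_Least[of r "\<lambda>k. 0 < k \<and> a [^] k \<in> H"] unfolding k[symmetric] by auto
  then show "k dvd n" using nqr by simp
qed


lemma char_step:
  assumes fin: "finite (carrier G)" and H: "subgroup H G" and ch: "char_on G H \<chi>"
    and a: "a \<in> carrier G"
    and k: "k = (LEAST k. 0 < k \<and> a [^] k \<in> H)"
    and z: "z ^ k = \<chi> (a [^] k)" "cmod z = 1"
  shows "\<exists>H' \<psi>. subgroup H' G \<and> H \<subseteq> H' \<and> a \<in> H' \<and> char_on G H' \<psi> \<and>
            (\<forall>x\<in>H. \<psi> x = \<chi> x) \<and> \<psi> a = z"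
proof -
  note kprops = least_pow_dvd[OF fin H a k]
  have Hc: "\<And>h. h \<in> H \<Longrightarrow> h \<in> carrier G" using H subgroup.subset by blast
  have chm: "\<And>x y. x \<in> H \<Longrightarrow> y \<in> H \<Longrightarrow> \<chi> (x \<otimes> y) = \<chi> x * \<chi> y"
    using ch unfolding char_on_def by blast
  have chn: "\<And>x. x \<in> H \<Longrightarrow> cmod (\<chi> x) = 1"
    using ch unfolding char_on_def by blast
  have aux: "\<chi> h * z ^ i = \<chi> h' * z ^ j"
    if hh: "h \<in> H" "h' \<in> H" "h \<otimes> a [^] i = h' \<otimes> a [^] j" "i \<le> j" for h h' i j
  proof -
    have "a [^] j = a [^] (j - i) \<otimes> a [^] i" using a that(4) by (simp add: nat_pow_mult)
    then have "h \<otimes> a [^] i = (h' \<otimes> a [^] (j - i)) \<otimes> a [^] i"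
      using hh a Hc by (simp add: m_assoc)
    then have e: "h = h' \<otimes> a [^] (j - i)"
      using hh a Hc by (simp add: right_cancel)
    then have "a [^] (j - i) = inv h' \<otimes> h" using hh a Hc by (simp add: inv_solve_left)
    then have aH: "a [^] (j - i) \<in> H" using H hh by (simp add: subgroup.m_inv_closed subgroup.m_closed)
    then obtain q where q: "j - i = k * q" using kprops(3) by (meson dvdE)
    have "\<chi> (a [^] (j - i)) = \<chi> ((a [^] k) [^] q)" using a q by (simp add: nat_pow_pow)
    also have "\<dots> = \<chi> (a [^] k) ^ q" using char_on_pow[OF ch H kprops(2)] by simp
    also have "\<dots> = z ^ (j - i)" using z(1) q by (simp add: power_mult)
    finally have "\<chi> h = \<chi> h' * z ^ (j - i)" using e chm hh aH by simp
    then show ?thesis using that(4) by (simp add: power_add[symmetric] mult.assoc)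
  qed
  have wd: "\<chi> h * z ^ i = \<chi> h' * z ^ j"
    if "h \<in> H" "h' \<in> H" "h \<otimes> a [^] i = h' \<otimes> a [^] j" for h h' i j
    using aux[of h h' i j] aux[of h' h j i] that by (cases "i \<le> j") auto
  define H' where "H' = {h \<otimes> a [^] (j::nat) | h j. h \<in> H}"
  define \<psi> where "\<psi> x = (SOME v. \<exists>h\<in>H. \<exists>j::nat. x = h \<otimes> a [^] j \<and> v = \<chi> h * z ^ j)" for x
  have psi: "\<psi> (h \<otimes> a [^] j) = \<chi> h * z ^ j" if "h \<in> H" for h and j :: nat
    unfolding \<psi>_def
    by (rule someI2[where a="\<chi> h * z ^ j"]) (use that in blast, use that wd in metis)
  have mem: "h \<otimes> a [^] j \<in> H'" if "h \<in> H" for h and j :: nat using that unfolding H'_def by blast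
  have M: "a [^] (order G - 1) \<otimes> a = \<one>"
  proof -
    have "0 < order G" using fin a by (metis card_gt_0_iff empty_iff order_def)
    then have "a [^] (order G - 1) \<otimes> a = a [^] order G" using a
      by (metis Suc_diff_1 nat_pow_Suc)
    then show ?thesis using a pow_order_eq_1 by simp
  qed
  then have inva: "inv a = a [^] (order G - 1)" using a by (simp add: inv_equality)
  have sub: "subgroup H' G"
  proof (rule subgroupI)
    show "H' \<subseteq> carrier G" unfolding H'_def using Hc a by auto
    show "H' \<noteq> {}" using mem[OF subgroup.one_closed[OF H], of 0] by blast
  next
    fix x assume "x \<in> H'"
    then obtain h and j :: nat where x: "x = h \<otimes> a [^] j" "h \<in> H" unfolding H'_def by blast
    have "inv x = inv h \<otimes> inv (a [^] j)" using x a Hc by (simp add: inv_mult)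
    also have "inv (a [^] j) = a [^] ((order G - 1) * j)"
      using a by (simp add: nat_pow_inv[symmetric] inva nat_pow_pow)
    finally show "inv x \<in> H'" using mem x H by (simp add: subgroup.m_inv_closed)
  next
    fix x y assume "x \<in> H'" "y \<in> H'"
    then obtain h h' and j j' :: nat where x: "x = h \<otimes> a [^] j" "h \<in> H" and y: "y = h' \<otimes> a [^] j'" "h' \<in> H"
      unfolding H'_def by blast
    have "x \<otimes> y = (h \<otimes> h') \<otimes> a [^] (j + j')" using x y a Hc by (simp add: m_ac nat_pow_mult[symmetric])
    then show "x \<otimes> y \<in> H'" using mem x y H by (simp add: subgroup.m_closed)
  qed
  have chr: "char_on G H' \<psi>"
    unfolding char_on_def
  proof (intro conjI ballI)
    fix x y assume "x \<in> H'" "y \<in> H'"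
    then obtain h h' and j j' :: nat where x: "x = h \<otimes> a [^] j" "h \<in> H" and y: "y = h' \<otimes> a [^] j'" "h' \<in> H"
      unfolding H'_def by blast
    have "x \<otimes> y = (h \<otimes> h') \<otimes> a [^] (j + j')" using x y a Hc by (simp add: m_ac nat_pow_mult[symmetric])
    then have "\<psi> (x \<otimes> y) = \<chi> (h \<otimes> h') * z ^ (j + j')" using psi H x y by (simp add: subgroup.m_closed)
    then show "\<psi> (x \<otimes> y) = \<psi> x * \<psi> y" using x y psi chm by (simp add: power_add)
  next
    fix x assume "x \<in> H'"
    then obtain h and j :: nat where x: "x = h \<otimes> a [^] j" "h \<in> H" unfolding H'_def by blast
    then show "cmod (\<psi> x) = 1" using psi chn z(2) by (simp add: norm_mult norm_power)
  qed
  have ext: "\<forall>x\<in>H. \<psi> x = \<chi> x" using psi[of _ 0] Hc by auto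
  have "\<psi> a = \<psi> (\<one> \<otimes> a [^] (1::nat))" using a by simp
  also have "\<dots> = z" using psi[OF subgroup.one_closed[OF H], of 1] char_on_one[OF ch H] by simp
  finally have pa: "\<psi> a = z" .
  have "a \<in> H'" using mem[OF subgroup.one_closed[OF H], of 1] a by simp
  moreover have "H \<subseteq> H'" using mem[of _ 0] Hc by force
  ultimately show ?thesis using sub chr ext pa by blast
qed

end

lemma norm_root_one:
  fixes z :: complex
  assumes "z ^ k = w" "cmod w = 1" "0 < k"
  shows "cmod z = 1"
proof -
  have "cmod z ^ k = 1 ^ k" using assms by (metis norm_power power_one)
  then show ?thesis using assms(3) power_eq_iff_eq_base[of k "cmod z" 1] by simp
qed

lemma exists_root:
  fixes w :: complex
  assumes "cmod w = 1" "0 < k"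
  shows "\<exists>z. z ^ k = w"
proof -
  have "cis (Arg w / real k) ^ k = cis (real k * (Arg w / real k))" by (rule DeMoivre)
  also have "real k * (Arg w / real k) = Arg w" using assms(2) by simp
  also have "cis (Arg w) = sgn w" using assms(1) by (intro cis_Arg) auto
  also have "sgn w = w" using assms(1) by (simp add: sgn_div_norm)
  finally show ?thesis by blast
qed

context comm_group
begin

lemma char_extend:
  assumes fin: "finite (carrier G)"
  shows "subgroup H G \<Longrightarrow> char_on G H \<chi> \<Longrightarrow> \<exists>\<psi>. char_on G (carrier G) \<psi> \<and> (\<forall>x\<in>H. \<psi> x = \<chi> x)"
proof (induction "card (carrier G) - card H" arbitrary: H \<chi> rule: less_induct)
  case less
  show ?case
  proof (cases "H = carrier G")
    case True then show ?thesis using less.prems by blast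
  next
    case False
    then obtain a where a: "a \<in> carrier G" "a \<notin> H" using less.prems(1) subgroup.subset by blast
    define k :: nat where "k = (LEAST k. 0 < k \<and> a [^] k \<in> H)"
    note kp = least_pow_dvd[OF fin less.prems(1) a(1) k_def]
    have wn: "cmod (\<chi> (a [^] k)) = 1" using less.prems(2) kp(2) unfolding char_on_def by blast
    obtain z where z: "z ^ k = \<chi> (a [^] k)" using exists_root[OF wn kp(1)] by blast
    have zn: "cmod z = 1" using norm_root_one[OF z wn kp(1)] .
    obtain H' \<psi> where st: "subgroup H' G" "H \<subseteq> H'" "a \<in> H'" "char_on G H' \<psi>" "\<forall>x\<in>H. \<psi> x = \<chi> x"
      using char_step[OF fin less.prems(1,2) a(1) k_def z zn] by blast
    have H'G: "H' \<subseteq> carrier G" using st(1) subgroup.subset by blast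
    then have fH': "finite H'" using fin finite_subset by blast
    have "card H < card H'" using st(2,3) a(2) fH' by (metis psubsetI psubset_card_mono)
    moreover have "card H' \<le> card (carrier G)" using H'G fin card_mono by blast
    ultimately have "card (carrier G) - card H' < card (carrier G) - card H" by linarith
    then obtain \<phi> where ph: "char_on G (carrier G) \<phi>" "\<forall>x\<in>H'. \<phi> x = \<psi> x"
      using less.hyps st(1,4) by blast
    show ?thesis
    proof (intro exI[of _ \<phi>] conjI ballI)
      show "char_on G (carrier G) \<phi>" by (rule ph(1))
      fix x assume "x \<in> H"
      then show "\<phi> x = \<chi> x" using ph(2) st(2,5) by auto
    qed
  qed
qed

lemma char_sep:
  assumes fin: "finite (carrier G)" and g: "g \<in> carrier G" "g \<noteq> \<one>"
  shows "\<exists>\<psi>. char_on G (carrier G) \<psi> \<and> \<psi> g \<noteq> 1"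
proof -
  define k :: nat where "k = (LEAST k. 0 < k \<and> g [^] k \<in> {\<one>})"
  note kp = least_pow_dvd[OF fin triv_subgroup g(1) k_def]
  have k1: "k \<noteq> 1"
  proof
    assume "k = 1"
    then have "g [^] (1::nat) = \<one>" using kp(2) by simp
    then show False using g by (metis l_one nat_pow_0 nat_pow_Suc One_nat_def)
  qed
  with kp(1) have k2: "2 \<le> k" by linarith
  have c0: "char_on G {\<one>} (\<lambda>_. 1)" unfolding char_on_def by simp
  define z where "z = cis (2 * pi / real k)"
  have "z ^ k = cis (real k * (2 * pi / real k))" unfolding z_def by (rule DeMoivre)
  also have "real k * (2 * pi / real k) = 2 * pi" using kp(1) by simp
  finally have zk: "z ^ k = 1" by (simp add: complex_eq_iff)
  have zn: "cmod z = 1" unfolding z_def by simp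
  have zne: "z \<noteq> 1"
  proof
    assume "z = 1"
    then have "cos (2 * pi / real k) = 1" unfolding z_def by (metis cis.sel(1) one_complex.sel(1))
    then obtain n :: nat where n: "2 * pi / real k = real n * 2 * pi \<or> 2 * pi / real k = - (real n * 2 * pi)"
      using cos_one_2pi by blast
    have pos: "0 < 2 * pi / real k" using k2 by simp
    have lt: "2 * pi / real k < 2 * pi" using k2 by (simp add: field_simps)
    show False
    proof (cases "n = 0")
      case True
      then have "real n * 2 * pi = 0" by simp
      then show False using n pos by linarith
    next
      case False
      then have "real n \<ge> 1" by simp
      then have "real n * (2 * pi) \<ge> 1 * (2 * pi)" by (intro mult_right_mono) auto
      then have "real n * 2 * pi \<ge> 2 * pi" by (simp add: mult.assoc)
      then show False using n pos lt by linarith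
    qed
  qed
  obtain H' \<psi> where st: "subgroup H' G" "char_on G H' \<psi>" "\<psi> g = z" "g \<in> H'"
    using char_step[OF fin triv_subgroup c0 g(1) k_def, of z] zk zn by auto
  obtain \<phi> where "char_on G (carrier G) \<phi>" "\<forall>x\<in>H'. \<phi> x = \<psi> x"
    using char_extend[OF fin st(1,2)] by blast
  then show ?thesis using st zne by auto
qed

end

definition chars :: "('a,'b) monoid_scheme \<Rightarrow> ('a \<Rightarrow> complex) set" where
  "chars G = {\<chi>. \<chi> \<in> extensional (carrier G) \<and> char_on G (carrier G) \<chi>}"

context comm_group
begin

lemma chars_pow_one:
  assumes "\<chi> \<in> chars G" "x \<in> carrier G"
  shows "\<chi> x ^ order G = 1"
proof -
  have c: "char_on G (carrier G) \<chi>" using assms unfolding chars_def by blast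
  have "\<chi> x ^ order G = \<chi> (x [^] order G)" using char_on_pow[OF c subgroup_self assms(2)] by simp
  also have "\<dots> = 1" using assms(2) pow_order_eq_1 char_on_one[OF c subgroup_self] by simp
  finally show ?thesis .
qed

lemma finite_chars:
  assumes fin: "finite (carrier G)"
  shows "finite (chars G)"
proof -
  have pos: "0 < order G" using fin by (metis card_gt_0_iff empty_iff one_closed order_def)
  have "chars G \<subseteq> (\<Pi>\<^sub>E x \<in> carrier G. {z. z ^ order G = 1})"
    using chars_pow_one unfolding chars_def by (auto simp: PiE_def)
  moreover have "finite (\<Pi>\<^sub>E x \<in> carrier G. {z::complex. z ^ order G = 1})"
    using fin pos by (intro finite_PiE) (auto intro: finite_roots_unity)
  ultimately show ?thesis using finite_subset by blast
qed

definition triv_char where "triv_char = restrict (\<lambda>_. 1) (carrier G)"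

lemma triv_in_chars: "triv_char \<in> chars G"
  unfolding chars_def triv_char_def char_on_def by auto

lemma chars_mult_closed:
  assumes "\<chi> \<in> chars G" "\<psi> \<in> chars G"
  shows "restrict (\<lambda>x. \<chi> x * \<psi> x) (carrier G) \<in> chars G"
  using assms unfolding chars_def char_on_def by (auto simp: norm_mult)

lemma chars_cnj_closed:
  assumes "\<chi> \<in> chars G"
  shows "restrict (\<lambda>x. cnj (\<chi> x)) (carrier G) \<in> chars G"
  using assms unfolding chars_def char_on_def by auto

lemma chars_norm: "\<chi> \<in> chars G \<Longrightarrow> x \<in> carrier G \<Longrightarrow> cmod (\<chi> x) = 1"
  unfolding chars_def char_on_def by blast

lemma chars_mult: "\<chi> \<in> chars G \<Longrightarrow> x \<in> carrier G \<Longrightarrow> y \<in> carrier G \<Longrightarrow> \<chi> (x \<otimes> y) = \<chi> x * \<chi> y"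
  unfolding chars_def char_on_def by blast

lemma cnj_mult_self: "cmod (c::complex) = 1 \<Longrightarrow> cnj c * c = 1"
  by (metis complex_norm_square mult.commute of_real_1 power_one)

lemma sum_group_char:
  assumes fin: "finite (carrier G)" and ch: "\<chi> \<in> chars G" and ne: "\<chi> \<noteq> triv_char"
  shows "(\<Sum>g\<in>carrier G. \<chi> g) = 0"
proof -
  obtain y where y: "y \<in> carrier G" "\<chi> y \<noteq> 1"
  proof -
    have "\<exists>y\<in>carrier G. \<chi> y \<noteq> 1"
    proof (rule ccontr)
      assume "\<not> ?thesis"
      then have "\<chi> = triv_char" using ch unfolding chars_def triv_char_def
        by (auto simp: extensional_def fun_eq_iff)
      with ne show False by simp
    qed
    then show ?thesis using that by blast
  qed
  have "(\<Sum>g\<in>carrier G. \<chi> g) = (\<Sum>g\<in>carrier G. \<chi> (y \<otimes> g))"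
    by (rule sum.reindex_bij_witness[where j="\<lambda>g. inv y \<otimes> g" and i="\<lambda>g. y \<otimes> g"])
       (use y in \<open>auto simp: m_assoc[symmetric]\<close>)
  also have "\<dots> = \<chi> y * (\<Sum>g\<in>carrier G. \<chi> g)"
    using chars_mult[OF ch y(1)] by (simp add: sum_distrib_left)
  finally have "(1 - \<chi> y) * (\<Sum>g\<in>carrier G. \<chi> g) = 0" by (simp add: algebra_simps)
  then show ?thesis using y(2) by simp
qed

lemma sum_chars_elem:
  assumes fin: "finite (carrier G)" and g: "g \<in> carrier G" "g \<noteq> \<one>"
  shows "(\<Sum>\<chi>\<in>chars G. \<chi> g) = 0"
proof -
  obtain \<psi> where ps: "char_on G (carrier G) \<psi>" "\<psi> g \<noteq> 1" using char_sep[OF fin g] by blast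
  define \<psi>0 where "\<psi>0 = restrict \<psi> (carrier G)"
  have p0: "\<psi>0 \<in> chars G" using ps(1) unfolding \<psi>0_def chars_def char_on_def by auto
  have p0g: "\<psi>0 g \<noteq> 1" using ps(2) g unfolding \<psi>0_def by simp
  have "(\<Sum>\<chi>\<in>chars G. (restrict (\<lambda>x. \<psi>0 x * \<chi> x) (carrier G)) g) = (\<Sum>\<chi>\<in>chars G. \<chi> g)"
  proof (rule sum.reindex_bij_witness[where i="\<lambda>\<chi>. restrict (\<lambda>x. cnj (\<psi>0 x) * \<chi> x) (carrier G)"
          and j="\<lambda>\<chi>. restrict (\<lambda>x. \<psi>0 x * \<chi> x) (carrier G)"])
    fix \<chi> assume c: "\<chi> \<in> chars G"
    show "restrict (\<lambda>x. \<psi>0 x * \<chi> x) (carrier G) \<in> chars G" using chars_mult_closed[OF p0 c] .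
    have e: "restrict (\<lambda>x. restrict (\<lambda>x. cnj (\<psi>0 x)) (carrier G) x * \<chi> x) (carrier G)
        = restrict (\<lambda>x. cnj (\<psi>0 x) * \<chi> x) (carrier G)" by (rule restrict_ext) simp
    show "restrict (\<lambda>x. cnj (\<psi>0 x) * \<chi> x) (carrier G) \<in> chars G"
      using chars_mult_closed[OF chars_cnj_closed[OF p0] c] unfolding e .
    show "restrict (\<lambda>x. cnj (\<psi>0 x) * restrict (\<lambda>x. \<psi>0 x * \<chi> x) (carrier G) x) (carrier G) = \<chi>"
      using c chars_norm[OF p0] cnj_mult_self unfolding chars_def
      by (auto simp: fun_eq_iff extensional_def mult.assoc[symmetric])
    show "restrict (\<lambda>x. \<psi>0 x * restrict (\<lambda>x. cnj (\<psi>0 x) * \<chi> x) (carrier G) x) (carrier G) = \<chi>"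
      using c chars_norm[OF p0] cnj_mult_self unfolding chars_def
      by (auto simp: fun_eq_iff extensional_def mult.assoc[symmetric] mult.commute[of "\<psi>0 _"])
  qed simp
  moreover have "(\<Sum>\<chi>\<in>chars G. (restrict (\<lambda>x. \<psi>0 x * \<chi> x) (carrier G)) g) = \<psi>0 g * (\<Sum>\<chi>\<in>chars G. \<chi> g)"
    using g by (simp add: sum_distrib_left)
  ultimately have "(1 - \<psi>0 g) * (\<Sum>\<chi>\<in>chars G. \<chi> g) = 0" by (simp add: algebra_simps)
  then show ?thesis using p0g by simp
qed

lemma chars_one: "\<chi> \<in> chars G \<Longrightarrow> \<chi> \<one> = 1"
  using char_on_one[OF _ subgroup_self] unfolding chars_def by blast

lemma sum_chars_one_elem: "(\<Sum>\<chi>\<in>chars G. \<chi> \<one>) = of_nat (card (chars G))"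
  by (simp add: chars_one)

lemma sum_group_triv: "(\<Sum>g\<in>carrier G. triv_char g) = of_nat (order G)"
  unfolding triv_char_def order_def by simp

lemma card_chars:
  assumes fin: "finite (carrier G)"
  shows "card (chars G) = order G"
proof -
  have fc: "finite (chars G)" using finite_chars[OF fin] .
  have "(\<Sum>g\<in>carrier G. \<Sum>\<chi>\<in>chars G. \<chi> g) = (\<Sum>g\<in>carrier G. if g = \<one> then of_nat (card (chars G)) else 0)"
    by (rule sum.cong) (auto simp: sum_chars_elem[OF fin] sum_chars_one_elem)
  also have "\<dots> = of_nat (card (chars G))" using fin by (simp add: sum.delta)
  finally have 1: "(\<Sum>g\<in>carrier G. \<Sum>\<chi>\<in>chars G. \<chi> g) = of_nat (card (chars G))" .
  have "(\<Sum>\<chi>\<in>chars G. \<Sum>g\<in>carrier G. \<chi> g) = (\<Sum>\<chi>\<in>chars G. if \<chi> = triv_char then of_nat (order G) else 0)"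
    by (rule sum.cong) (auto simp: sum_group_char[OF fin] sum_group_triv)
  also have "\<dots> = of_nat (order G)" using fc triv_in_chars by (simp add: sum.delta)
  finally have 2: "(\<Sum>\<chi>\<in>chars G. \<Sum>g\<in>carrier G. \<chi> g) = (of_nat (order G) :: complex)" .
  have "(of_nat (card (chars G)) :: complex) = of_nat (order G)"
  proof -
    have "(\<Sum>g\<in>carrier G. \<Sum>\<chi>\<in>chars G. \<chi> g) = (\<Sum>\<chi>\<in>chars G. \<Sum>g\<in>carrier G. \<chi> g)"
      by (rule sum.swap)
    then show ?thesis using 1 2 by simp
  qed
  then show ?thesis by (simp only: of_nat_eq_iff)
qed

lemma chars_orth:
  assumes fin: "finite (carrier G)" and u: "u \<in> carrier G"
  shows "(\<Sum>\<chi>\<in>chars G. \<chi> u) = (if u = \<one> then of_nat (order G) else 0)"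
  using sum_chars_elem[OF fin u] sum_chars_one_elem card_chars[OF fin] by auto

lemma chars_cnj:
  "\<chi> \<in> chars G \<Longrightarrow> x \<in> carrier G \<Longrightarrow> cnj (\<chi> x) = \<chi> (inv x)"
  using char_on_inv[OF _ subgroup_self] unfolding chars_def by auto

end

lemma sum_split_nat:
  fixes m d :: nat
  shows "(\<Sum>k<m+d. g k) = (\<Sum>k<m. g k) + (\<Sum>t<d. g (m + t))"
  by (induction d) (simp_all add: algebra_simps)

lemma pow2_aux:
  fixes a b c e :: nat
  assumes "a \<le> b" "c \<le> e" "a \<le> c" "(2::nat)^a + 2^b = 2^c + 2^e"
  shows "a = c \<and> b = e"
proof -
  define p q r where "p = b - a" and "q = c - a" and "r = e - a"
  have "(2::nat)^a * (1 + 2^p) = 2^a * (2^q + 2^r)"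
    using assms unfolding p_def q_def r_def
    by (simp add: algebra_simps power_add[symmetric])
  then have eq: "(1::nat) + 2^p = 2^q + 2^r"
    by (metis mult_left_cancel power_not_zero zero_neq_numeral)
  have qr: "q \<le> r" using assms unfolding q_def r_def by simp
  have q0: "q = 0"
  proof (rule ccontr)
    assume "q \<noteq> 0"
    then have r0: "r \<noteq> 0" using qr by simp
    then have ev: "even ((2::nat)^q + 2^r)" using \<open>q \<noteq> 0\<close> by simp
    show False
    proof (cases "p = 0")
      case True
      have "(2::nat)^q \<ge> 2" "(2::nat)^r \<ge> 2" using \<open>q \<noteq> 0\<close> r0
        by (metis One_nat_def Suc_leI neq0_conv power_increasing power_one_right zero_less_numeral)+
      then show False using eq True by simp
    next
      case False
      then have "odd ((1::nat) + 2^p)" by simp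
      moreover have "even ((1::nat) + 2^p)" using ev by (simp only: eq)
      ultimately show False by blast
    qed
  qed
  then have "(2::nat)^p = 2^r" using eq by simp
  then have "p = r" by simp
  then show ?thesis using q0 assms unfolding p_def q_def r_def by simp
qed

lemma pow2_sidon:
  fixes a b c e :: nat
  assumes "(2::nat)^a + 2^b = 2^c + 2^e"
  shows "{a, b} = {c, e}"
proof -
  have g: "\<And>a b c e. a \<le> b \<Longrightarrow> c \<le> e \<Longrightarrow> (2::nat)^a + 2^b = 2^c + 2^e \<Longrightarrow> {a, b} = {c, e}"
  proof -
    fix a b c e :: nat
    assume h: "a \<le> b" "c \<le> e" "(2::nat)^a + 2^b = 2^c + 2^e"
    show "{a, b} = {c, e}"
    proof (cases "a \<le> c")
      case True then show ?thesis using pow2_aux[OF h(1,2) True h(3)] by simp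
    next
      case False then show ?thesis using pow2_aux[OF h(2,1) _ h(3)[symmetric]] by simp
    qed
  qed
  show ?thesis
  proof (cases "a \<le> b")
    case True
    show ?thesis
    proof (cases "c \<le> e")
      case True then show ?thesis using g[of a b c e] \<open>a \<le> b\<close> assms by simp
    next
      case False then show ?thesis using g[of a b e c] \<open>a \<le> b\<close> assms by (simp add: insert_commute add.commute)
    qed
  next
    case False
    show ?thesis
    proof (cases "c \<le> e")
      case True then show ?thesis using g[of b a c e] False assms by (simp add: insert_commute add.commute)
    next
      case F2: False then show ?thesis using g[of b a e c] False assms by (simp add: insert_commute add.commute)
    qed
  qed
qed

definition zmod :: "nat \<Rightarrow> nat monoid" where
  "zmod N = \<lparr>carrier = {..<N}, mult = (\<lambda>x y. (x + y) mod N), one = 0\<rparr>"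

lemma zmod_group:
  assumes "0 < N" shows "comm_group (zmod N)"
proof (rule comm_groupI)
  fix x y z assume "x \<in> carrier (zmod N)" "y \<in> carrier (zmod N)" "z \<in> carrier (zmod N)"
  then show "x \<otimes>\<^bsub>zmod N\<^esub> y \<otimes>\<^bsub>zmod N\<^esub> z = x \<otimes>\<^bsub>zmod N\<^esub> (y \<otimes>\<^bsub>zmod N\<^esub> z)"
    unfolding zmod_def by (simp add: mod_add_left_eq mod_add_right_eq add.assoc)
next
  fix x assume x: "x \<in> carrier (zmod N)"
  show "\<exists>y\<in>carrier (zmod N). y \<otimes>\<^bsub>zmod N\<^esub> x = \<one>\<^bsub>zmod N\<^esub>"
  proof (intro bexI[of _ "(N - x) mod N"])
    show "(N - x) mod N \<in> carrier (zmod N)" using assms unfolding zmod_def by simp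
    show "(N - x) mod N \<otimes>\<^bsub>zmod N\<^esub> x = \<one>\<^bsub>zmod N\<^esub>"
      using x unfolding zmod_def by (simp add: mod_add_left_eq)
  qed
qed (use assms in \<open>auto simp: zmod_def add.commute\<close>)

lemma sidon_exists:
  "\<exists>N. \<exists>G :: nat monoid. comm_group G \<and> finite (carrier G) \<and>
       card (carrier G) = N \<and> (\<exists>S. sidon G S \<and> card S = d)"
proof -
  define N :: nat where "N = 2 ^ (d + 1)"
  define S where "S = (\<lambda>i. (2::nat) ^ i) ` {..<d}"
  have Np: "0 < N" unfolding N_def by simp
  have Sl: "\<And>a. a \<in> S \<Longrightarrow> a < 2 ^ d" unfolding S_def by auto
  have "card S = d" unfolding S_def
    by (subst card_image) (auto simp: inj_on_def)
  moreover have "sidon (zmod N) S"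
    unfolding sidon_def
  proof (intro conjI ballI impI)
    have "(2::nat)^d < N" unfolding N_def by simp
    then show "S \<subseteq> carrier (zmod N)" using Sl unfolding zmod_def
      by (simp add: subset_eq) (meson less_trans)
  next
    fix a b c e assume abce: "a \<in> S" "b \<in> S" "c \<in> S" "e \<in> S"
      and h: "a \<otimes>\<^bsub>zmod N\<^esub> b = c \<otimes>\<^bsub>zmod N\<^esub> e"
    have "a + b < N" "c + e < N" using Sl[OF abce(1)] Sl[OF abce(2)] Sl[OF abce(3)] Sl[OF abce(4)]
      unfolding N_def by simp_all
    then have "a + b = c + e" using h unfolding zmod_def by simp
    moreover obtain ia ib ic ie where "a = 2^ia" "b = 2^ib" "c = 2^ic" "e = 2^ie"
      using abce unfolding S_def by blast
    ultimately have "{ia, ib} = {ic, ie}" by (intro pow2_sidon) simp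
    then show "{a, b} = {c, e}" using \<open>a = 2^ia\<close> \<open>b = 2^ib\<close> \<open>c = 2^ic\<close> \<open>e = 2^ie\<close>
      by (metis doubleton_eq_iff)
  qed
  ultimately show ?thesis using zmod_group[OF Np]
    by (intro exI[of _ N] exI[of _ "zmod N"]) (auto simp: zmod_def)
qed


context comm_group
begin

lemma chars_prod4:
  assumes "\<chi> \<in> chars G" "a \<in> carrier G" "b \<in> carrier G" "a' \<in> carrier G" "b' \<in> carrier G"
  shows "\<chi> a * \<chi> b * cnj (\<chi> a' * \<chi> b') = \<chi> (a \<otimes> b \<otimes> inv (a' \<otimes> b'))"
proof -
  have "\<chi> (a \<otimes> b \<otimes> inv (a' \<otimes> b')) = \<chi> (a \<otimes> b) * \<chi> (inv (a' \<otimes> b'))"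
    using assms by (simp add: chars_mult)
  also have "\<chi> (inv (a' \<otimes> b')) = cnj (\<chi> (a' \<otimes> b'))" using assms by (simp add: chars_cnj)
  finally have f: "\<chi> (a \<otimes> b \<otimes> inv (a' \<otimes> b')) = \<chi> (a \<otimes> b) * cnj (\<chi> (a' \<otimes> b'))" .
  have e1: "\<chi> (a \<otimes> b) = \<chi> a * \<chi> b" using assms by (simp add: chars_mult)
  have e2: "\<chi> (a' \<otimes> b') = \<chi> a' * \<chi> b'" using assms by (simp add: chars_mult)
  show ?thesis using f unfolding e1 e2 by simp
qed

lemma mult_inv_eq_one: "a \<in> carrier G \<Longrightarrow> b \<in> carrier G \<Longrightarrow> (a \<otimes> inv b = \<one>) = (a = b)"
  by (metis inv_closed inv_equality inv_inv r_inv)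

lemma design_from_sidon:
  assumes fin: "finite (carrier G)" and sid: "sidon G S" and cS: "card S = d" and d0: "0 < d"
  shows "\<exists>x. weighted_2design d (order G + d) x"
proof -
  define M where "M = order G"
  have M0: "0 < M" unfolding M_def using fin by (metis card_gt_0_iff empty_iff one_closed order_def)
  obtain e where e: "bij_betw e {0..<M} (chars G)"
    using ex_bij_betw_nat_finite[OF finite_chars[OF fin]] card_chars[OF fin] unfolding M_def by metis
  have ek: "\<And>k. k < M \<Longrightarrow> e k \<in> chars G" using e bij_betwE by fastforce
  have fS: "finite S" using cS d0 card_ge_0_finite by blast
  obtain s where s: "bij_betw s {0..<d} S" using ex_bij_betw_nat_finite[OF fS] cS by metis
  have SG: "S \<subseteq> carrier G" using sid unfolding sidon_def by blast
  have si: "\<And>i. i < d \<Longrightarrow> s i \<in> carrier G" using s SG bij_betwE by fastforce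
  have sinj: "\<And>i j. i < d \<Longrightarrow> j < d \<Longrightarrow> s i = s j \<longleftrightarrow> i = j"
    using s unfolding bij_betw_def inj_on_def by auto
  define c :: complex where "c = of_real (1 / sqrt (real d))"
  define x where "x k i = (if k < M then e k (s i) * c else (if i = k - M then 1 else 0))" for k i
  define w where "w k = (if k < M then (real d)^2 / (2 * real M) else 1/2)" for k
  have cn: "cmod c ^ 2 = 1 / real d" unfolding c_def norm_of_real using d0
    by (simp add: power_divide)
  have r2: "(1 / sqrt (real d))^2 = 1 / real d" using d0 by (simp add: power_divide)
  have "c * c * cnj (c * c) = of_real (((1 / sqrt (real d))^2)^2)" unfolding c_def
    by (simp only: complex_cnj_mult complex_cnj_complex_of_real of_real_mult of_real_power power2_eq_square)
  also have "\<dots> = of_real (1 / (real d)^2)" unfolding r2 by (simp add: power_divide)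
  finally have c4: "c * c * cnj (c * c) = of_real (1 / (real d)^2)" .
  have unit: "unit_vec d (x k)" if k: "k < M + d" for k
  proof (cases "k < M")
    case True
    have "(\<Sum>i<d. (cmod (x k i))^2) = (\<Sum>i<d. 1 / real d)"
    proof (rule sum.cong)
      fix i assume "i \<in> {..<d}"
      then have "cmod (e k (s i)) = 1" using chars_norm ek[OF True] si by simp
      then show "(cmod (x k i))^2 = 1 / real d" unfolding x_def using True cn
        by (simp add: norm_mult power_mult_distrib)
    qed simp
    also have "\<dots> = 1" using d0 by simp
    finally show ?thesis unfolding unit_vec_def .
  next
    case False
    have "(\<Sum>i<d. (cmod (x k i))^2) = (\<Sum>i<d. if i = k - M then 1 else 0)"
      by (rule sum.cong) (auto simp: x_def False)
    also have "\<dots> = 1" using k False by simp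
    finally show ?thesis unfolding unit_vec_def .
  qed
  have entry: "(\<Sum>k<M+d. complex_of_real (w k) * (x k i * x k j) * cnj (x k i' * x k j'))
      = sym_proj_entry i j i' j'" if ij: "i < d" "j < d" "i' < d" "j' < d" for i j i' j'
  proof -
    define u where "u = s i \<otimes> s j \<otimes> inv (s i' \<otimes> s j')"
    have uG: "u \<in> carrier G" unfolding u_def using si ij by simp
    have A: "(\<Sum>k<M. complex_of_real (w k) * (x k i * x k j) * cnj (x k i' * x k j'))
        = (\<Sum>k<M. of_real (1 / (2 * real M)) * e k u)"
    proof (rule sum.cong)
      fix k assume "k \<in> {..<M}"
      then have k: "k < M" by simp
      have "complex_of_real (w k) * (x k i * x k j) * cnj (x k i' * x k j')
          = of_real ((real d)^2 / (2 * real M)) * (c * c * cnj (c * c)) *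
            (e k (s i) * e k (s j) * cnj (e k (s i') * e k (s j')))"
      proof -
        have xk: "\<And>i. x k i = e k (s i) * c" using k unfolding x_def by simp
        have wk: "w k = (real d)^2 / (2 * real M)" using k unfolding w_def by simp
        show ?thesis unfolding xk wk complex_cnj_mult by (simp only: ac_simps)
      qed
      also have "\<dots> = of_real ((real d)^2 / (2 * real M) * (1 / (real d)^2)) * e k u"
        unfolding c4 u_def using chars_prod4[OF ek[OF k] si[OF ij(1)] si[OF ij(2)] si[OF ij(3)] si[OF ij(4)]]
        by simp
      also have "(real d)^2 / (2 * real M) * (1 / (real d)^2) = 1 / (2 * real M)" using d0 by simp
      finally show "complex_of_real (w k) * (x k i * x k j) * cnj (x k i' * x k j')
          = of_real (1 / (2 * real M)) * e k u" .
    qed simp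
    also have "\<dots> = of_real (1 / (2 * real M)) * (\<Sum>k<M. e k u)" by (simp add: sum_distrib_left)
    also have "(\<Sum>k<M. e k u) = (\<Sum>\<chi>\<in>chars G. \<chi> u)"
      using sum.reindex_bij_betw[OF e, of "\<lambda>\<chi>. \<chi> u"] by (simp add: atLeast0LessThan)
    also have "\<dots> = (if u = \<one> then of_nat M else 0)" using chars_orth[OF fin uG] unfolding M_def .
    finally have A': "(\<Sum>k<M. complex_of_real (w k) * (x k i * x k j) * cnj (x k i' * x k j'))
        = (if u = \<one> then 1/2 else 0)" using M0 by simp
    have "u = \<one> \<longleftrightarrow> s i \<otimes> s j = s i' \<otimes> s j'" unfolding u_def using si ij mult_inv_eq_one by simp
    also have "\<dots> \<longleftrightarrow> {s i, s j} = {s i', s j'}"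
    proof
      assume "s i \<otimes> s j = s i' \<otimes> s j'"
      then show "{s i, s j} = {s i', s j'}" using sid ij s unfolding sidon_def bij_betw_def
        by (metis atLeastLessThan_iff image_eqI zero_le)
    next
      assume "{s i, s j} = {s i', s j'}"
      then show "s i \<otimes> s j = s i' \<otimes> s j'" using si ij m_comm by (metis doubleton_eq_iff)
    qed
    also have "\<dots> \<longleftrightarrow> (i = i' \<and> j = j') \<or> (i = j' \<and> j = i')"
      using sinj ij by (auto simp: doubleton_eq_iff)
    finally have uiff: "u = \<one> \<longleftrightarrow> (i = i' \<and> j = j') \<or> (i = j' \<and> j = i')" .
    have B: "(\<Sum>t<d. complex_of_real (w (M+t)) * (x (M+t) i * x (M+t) j) * cnj (x (M+t) i' * x (M+t) j'))
        = (\<Sum>t<d. if t = i then (if j = i \<and> i' = i \<and> j' = i then 1/2 else 0) else 0)"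
      by (rule sum.cong) (auto simp: x_def w_def)
    also have "\<dots> = (if j = i \<and> i' = i \<and> j' = i then 1/2 else 0)" using ij by simp
    finally have B': "(\<Sum>t<d. complex_of_real (w (M+t)) * (x (M+t) i * x (M+t) j) * cnj (x (M+t) i' * x (M+t) j'))
        = (if j = i \<and> i' = i \<and> j' = i then 1/2 else 0)" .
    have split: "(\<Sum>k<M+d. complex_of_real (w k) * (x k i * x k j) * cnj (x k i' * x k j'))
       = (\<Sum>k<M. complex_of_real (w k) * (x k i * x k j) * cnj (x k i' * x k j'))
       + (\<Sum>t<d. complex_of_real (w (M+t)) * (x (M+t) i * x (M+t) j) * cnj (x (M+t) i' * x (M+t) j'))"
      by (rule sum_split_nat)
    have fin: "(if (i = i' \<and> j = j') \<or> (i = j' \<and> j = i') then 1/2 else 0)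
        + (if j = i \<and> i' = i \<and> j' = i then 1/2 else (0::complex)) = sym_proj_entry i j i' j'"
      unfolding sym_proj_entry_def
      by (cases "i = i'"; cases "j = j'"; cases "i = j'"; cases "j = i'") simp_all
    show ?thesis unfolding split A' B' uiff fin ..
  qed
  have "weighted_2design d (M + d) x"
    unfolding weighted_2design_def
  proof (intro conjI allI impI exI[of _ w])
    show "\<And>k. k < M + d \<Longrightarrow> unit_vec d (x k)" using unit by blast
    show "\<And>k. k < M + d \<Longrightarrow> 0 \<le> w k" unfolding w_def by simp
    show "\<And>i j i' j'. i < d \<Longrightarrow> j < d \<Longrightarrow> i' < d \<Longrightarrow> j' < d \<Longrightarrow>
      (\<Sum>k<M + d. complex_of_real (w k) * (x k i * x k j) * cnj (x k i' * x k j')) = sym_proj_entry i j i' j'"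
      using entry by blast
  qed
  then show ?thesis unfolding M_def by blast
qed

end

theorem mainTheorem2:
  fixes d :: nat
  shows "n_design d \<le> m_sidon d + d"
proof (cases "d = 0")
  case True
  have "\<exists>x. weighted_2design 0 0 x" unfolding weighted_2design_def by auto
  then have "n_design 0 \<le> 0" unfolding n_design_def by (rule Least_le)
  then show ?thesis using True by simp
next
  case False
  have "\<exists>G :: nat monoid. comm_group G \<and> finite (carrier G) \<and>
       card (carrier G) = m_sidon d \<and> (\<exists>S. sidon G S \<and> card S = d)"
    unfolding m_sidon_def by (rule LeastI_ex) (rule sidon_exists)
  then obtain G :: "nat monoid" and S where G: "comm_group G" "finite (carrier G)"
    "card (carrier G) = m_sidon d" "sidon G S" "card S = d" by blast
  then have "\<exists>x. weighted_2design d (order G + d) x"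
    using comm_group.design_from_sidon[OF G(1) G(2) G(4) G(5)] False by blast
  then have "n_design d \<le> order G + d" unfolding n_design_def by (rule Least_le)
  then show ?thesis using G(3) unfolding order_def by simp
qed

end
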